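(* Let $\Omega=(0,L)^2$ with periodic boundary conditions, $M$ a positive integer, $h=L/M$, and let $\Lambda_h$ be the standard five-point central-difference matrix of the Laplacian on the periodic grid $\{(ih,jh):1\le i,j\le M\}$ (diagonal entries $-4/h^2$, off-diagonal entries $1/h^2$ for the four neighbours, $0$ otherwise); let $\varepsilon>0$ and $I$ the identity matrix. Let $\tau_k>0$ be time steps, $r_k=\tau_k/\tau_{k-1}$ for $2\le k\le N$, $r_1:=0$. Define $b_0^{(1)}=1/\tau_1$, $b_1^{(1)}=0$ and for $n\ge2$ $$b_0^{(n)}=\frac{1+2r_n}{\tau_n(1+r_n)},\qquad b_1^{(n)}=-\frac{r_n^2}{\tau_n(1+r_n)}.$$ Let $\eta$ be a real number with $\frac{r_k^2}{1+2r_k}\le\eta<1$ for all $2\le k\le N$, define $d_0^{(n)}=b_0^{(n)}$ and $d_j^{(n)}=\eta^{j-1}(b_0^{(n)}\eta+b_1^{(n)})$ for $1\le j\le n$, let $S_n$ ($n\ge1$) be real parameters, and set $$Q_j^{(n)}=\big(d_{j-1}^{(n)}-d_j^{(n)}-S_n\eta^j\big)I+\eta^j\varepsilon^2\Lambda_h,\qquad 1\le j\le n.$$ Assume $0<r_k<1+\sqrt2$ for $2\le k\le N$ and $$\tau_n\le\frac{(1+2r_n)\eta-r_n^2}{\eta^2(1+r_n)}\cdot\frac{1-\eta}{S_n+4\varepsilon^2h^{-2}}\quad\text{for } n\ge1.$$ Then $\|Q_j^{(n)}\|_\infty\le d_{j-1}^{(n)}-d_j^{(n)}-S_n\eta^j$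 for $1\le j\le n$, where $\|\cdot\|_\infty$ is the matrix norm induced by the vector maximum norm (maximum absolute row sum). *)

theory Defs
  imports Complex_Main
begin

text \<open>Periodic grid with M points per direction; grid point (i,j), 0 <= i,j < M,
  stands for (i+1)h,(j+1)h. Matrices on the grid are functions
  grid index => grid index => real.\<close>

definition grid :: "nat \<Rightarrow> (nat \<times> nat) set" where
  "grid M = {0..<M} \<times> {0..<M}"

type_synonym gmat = "nat \<times> nat \<Rightarrow> nat \<times> nat \<Rightarrow> real"

definition idm :: gmat where
  "idm p q = (if p = q then 1 else 0)"

definition lap :: "nat \<Rightarrow> real \<Rightarrow> gmat" where
  "lap M h p q =
     (let (i, j) = p in
       (if q = (i, j) then - 4 / h\<^sup>2 else 0)
     + (if q = ((i + 1) mod M, j) then 1 / h\<^sup>2 else 0)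
     + (if q = ((i + M - 1) mod M, j) then 1 / h\<^sup>2 else 0)
     + (if q = (i, (j + 1) mod M) then 1 / h\<^sup>2 else 0)
     + (if q = (i, (j + M - 1) mod M) then 1 / h\<^sup>2 else 0))"

definition inf_norm :: "nat \<Rightarrow> gmat \<Rightarrow> real" where
  "inf_norm M A = Max ((\<lambda>p. \<Sum>q\<in>grid M. \<bar>A p q\<bar>) ` grid M)"

definition step_ratio :: "(nat \<Rightarrow> real) \<Rightarrow> nat \<Rightarrow> real" where
  "step_ratio \<tau> k = (if k = 1 then 0 else \<tau> k / \<tau> (k - 1))"

definition b0 :: "(nat \<Rightarrow> real) \<Rightarrow> nat \<Rightarrow> real" where
  "b0 \<tau> n = (if n = 1 then 1 / \<tau> 1
     else (1 + 2 * step_ratio \<tau> n) / (\<tau> n * (1 + step_ratio \<tau> n)))"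

definition b1 :: "(nat \<Rightarrow> real) \<Rightarrow> nat \<Rightarrow> real" where
  "b1 \<tau> n = (if n = 1 then 0
     else - ((step_ratio \<tau> n)\<^sup>2) / (\<tau> n * (1 + step_ratio \<tau> n)))"

definition dcoef :: "(nat \<Rightarrow> real) \<Rightarrow> real \<Rightarrow> nat \<Rightarrow> nat \<Rightarrow> real" where
  "dcoef \<tau> \<eta> n j = (if j = 0 then b0 \<tau> n
     else \<eta> ^ (j - 1) * (b0 \<tau> n * \<eta> + b1 \<tau> n))"

definition Qmat :: "nat \<Rightarrow> real \<Rightarrow> real \<Rightarrow> (nat \<Rightarrow> real) \<Rightarrow> real \<Rightarrow> (nat \<Rightarrow> real)
    \<Rightarrow> nat \<Rightarrow> nat \<Rightarrow> gmat" where
  "Qmat M h \<epsilon> \<tau> \<eta> S n j p q =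
     (dcoef \<tau> \<eta> n (j - 1) - dcoef \<tau> \<eta> n j - S n * \<eta> ^ j) * idm p q
     + \<eta> ^ j * \<epsilon>\<^sup>2 * lap M h p q"

end

theory Submission
  imports Defs
begin

lemma lap_lower: "lap M h p q \<ge> (if q = p then - 4 / h\<^sup>2 else 0)"
  unfolding lap_def by (cases p) (auto simp: Let_def)

lemma lap_rowsum:
  assumes "p \<in> grid M"
  shows "(\<Sum>q\<in>grid M. lap M h p q) = 0"
proof -
  obtain i j where p: "p = (i, j)" by (cases p)
  have ij: "i < M" "j < M" using assms p by (auto simp: grid_def)
  have fin: "finite (grid M)" by (simp add: grid_def)
  have mem: "(i, j) \<in> grid M" "((i + 1) mod M, j) \<in> grid M" "((i + M - 1) mod M, j) \<in> grid M"
     "(i, (j + 1) mod M) \<in> grid M" "(i, (j + M - 1) mod M) \<in> grid M"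
    using ij by (auto simp: grid_def)
  have "(\<Sum>q\<in>grid M. lap M h p q) =
     (\<Sum>q\<in>grid M. (if q = (i, j) then - 4 / h\<^sup>2 else 0))
     + (\<Sum>q\<in>grid M. (if q = ((i + 1) mod M, j) then 1 / h\<^sup>2 else 0))
     + (\<Sum>q\<in>grid M. (if q = ((i + M - 1) mod M, j) then 1 / h\<^sup>2 else 0))
     + (\<Sum>q\<in>grid M. (if q = (i, (j + 1) mod M) then 1 / h\<^sup>2 else 0))
     + (\<Sum>q\<in>grid M. (if q = (i, (j + M - 1) mod M) then 1 / h\<^sup>2 else 0))"
    unfolding lap_def p by (simp add: sum.distrib)
  also have "\<dots> = 0" using mem fin by (simp add: sum.delta)
  finally show ?thesis .
qed

lemma idm_rowsum:
  assumes "p \<in> grid M"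
  shows "(\<Sum>q\<in>grid M. idm p q) = 1"
proof -
  have fin: "finite (grid M)" by (simp add: grid_def)
  have "(\<Sum>q\<in>grid M. idm p q) = (\<Sum>q\<in>grid M. if q = p then 1 else 0)"
    by (rule sum.cong) (auto simp: idm_def)
  also have "\<dots> = 1" using assms fin by (simp add: sum.delta)
  finally show ?thesis .
qed

lemma norm_main:
  fixes c t h :: real and M :: nat
  assumes "M > 0" "t \<ge> 0" "c \<ge> t * (4 / h\<^sup>2)"
  shows "inf_norm M (\<lambda>p q. c * idm p q + t * lap M h p q) \<le> c"
proof -
  have fin: "finite (grid M)" by (simp add: grid_def)
  have ne: "grid M \<noteq> {}" using assms(1) by (auto simp: grid_def)
  have row: "(\<Sum>q\<in>grid M. \<bar>c * idm p q + t * lap M h p q\<bar>) = c" if p: "p \<in> grid M" for p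
  proof -
    have nn: "c * idm p q + t * lap M h p q \<ge> 0" for q
    proof -
      have "t * lap M h p q \<ge> t * (if q = p then - 4 / h\<^sup>2 else 0)"
        using lap_lower assms(2) by (rule mult_left_mono)
      moreover have "c * idm p q + t * (if q = p then - 4 / h\<^sup>2 else 0) \<ge> 0"
        using assms(2,3) by (auto simp: idm_def)
      ultimately show ?thesis by linarith
    qed
    have "(\<Sum>q\<in>grid M. \<bar>c * idm p q + t * lap M h p q\<bar>)
        = (\<Sum>q\<in>grid M. c * idm p q + t * lap M h p q)"
      using nn by simp
    also have "\<dots> = c * (\<Sum>q\<in>grid M. idm p q) + t * (\<Sum>q\<in>grid M. lap M h p q)"
      by (simp add: sum.distrib sum_distrib_left)
    also have "\<dots> = c" using idm_rowsum[OF p] lap_rowsum[OF p] by simp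
    finally show ?thesis .
  qed
  show ?thesis unfolding inf_norm_def
    using fin ne row by (subst Max_le_iff) auto
qed

theorem lemma4p1:
  fixes L \<epsilon> \<eta> :: real and M N :: nat and \<tau> S :: "nat \<Rightarrow> real"
  assumes "L > 0" and "M > 0" and "\<epsilon> > 0"
    and "\<eta> > 0"
    and tau_pos: "\<And>k. 1 \<le> k \<Longrightarrow> k \<le> N \<Longrightarrow> \<tau> k > 0"
    and eta_lower: "\<And>k. 2 \<le> k \<Longrightarrow> k \<le> N \<Longrightarrow>
           (step_ratio \<tau> k)\<^sup>2 / (1 + 2 * step_ratio \<tau> k) \<le> \<eta>"
    and "\<eta> < 1"
    and r_bounds: "\<And>k. 2 \<le> k \<Longrightarrow> k \<le> N \<Longrightarrow>
           0 < step_ratio \<tau> k \<and> step_ratio \<tau> k < 1 + sqrt 2"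
    and tau_bound: "\<And>n. 1 \<le> n \<Longrightarrow> n \<le> N \<Longrightarrow>
           \<tau> n \<le> ((1 + 2 * step_ratio \<tau> n) * \<eta> - (step_ratio \<tau> n)\<^sup>2)
                    / (\<eta>\<^sup>2 * (1 + step_ratio \<tau> n))
                  * ((1 - \<eta>) / (S n + 4 * \<epsilon>\<^sup>2 / (L / real M)\<^sup>2))"
    and "1 \<le> n" and "n \<le> N" and "1 \<le> j" and "j \<le> n"
  shows "inf_norm M (Qmat M (L / real M) \<epsilon> \<tau> \<eta> S n j)
           \<le> dcoef \<tau> \<eta> n (j - 1) - dcoef \<tau> \<eta> n j - S n * \<eta> ^ j"
proof -
  note n1 = \<open>1 \<le> n\<close> and nN = \<open>n \<le> N\<close> and j1 = \<open>1 \<le> j\<close>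
  note e0 = \<open>\<eta> > 0\<close> and e1 = \<open>\<eta> < 1\<close>
  define r where "r = step_ratio \<tau> n"
  define h where "h = L / real M"
  define K where "K = 4 * \<epsilon>\<^sup>2 / h\<^sup>2"
  define P where "P = S n + K"
  define A where "A = (1 + 2 * r) * \<eta> - r\<^sup>2"
  have tau: "\<tau> n > 0" using tau_pos[OF n1 nN] .
  have r0: "r \<ge> 0"
  proof (cases "n = 1")
    case True then show ?thesis by (simp add: r_def step_ratio_def)
  next
    case False then have "2 \<le> n" using n1 by linarith
    then show ?thesis using r_bounds[of n] nN unfolding r_def by auto
  qed
  have A0: "A \<ge> 0"
  proof (cases "n = 1")
    case True then show ?thesis using e0 by (simp add: A_def r_def step_ratio_def)
  next
    case False
    then have "2 \<le> n" using n1 by linarith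
    then have "r\<^sup>2 / (1 + 2 * r) \<le> \<eta>" using eta_lower[of n] nN unfolding r_def by auto
    then show ?thesis using r0 by (simp add: A_def divide_le_eq algebra_simps)
  qed
  have b0: "b0 \<tau> n = (1 + 2 * r) / (\<tau> n * (1 + r))"
    by (auto simp: b0_def r_def step_ratio_def)
  have b1: "b1 \<tau> n = - r\<^sup>2 / (\<tau> n * (1 + r))"
    by (auto simp: b1_def r_def step_ratio_def)
  define D where "D = \<tau> n * (1 + r)"
  have D0: "D > 0" using tau r0 by (simp add: D_def)
  have B: "b0 \<tau> n * \<eta> + b1 \<tau> n = A / D"
    unfolding b0 b1 A_def D_def by (simp add: diff_divide_distrib)
  have tb: "\<tau> n \<le> A / (\<eta>\<^sup>2 * (1 + r)) * ((1 - \<eta>) / P)"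
    using tau_bound[OF n1 nN] unfolding A_def r_def P_def K_def h_def .
  have P0: "P > 0"
  proof (rule ccontr)
    assume "\<not> P > 0"
    then have "(1 - \<eta>) / P \<le> 0" using e1 by (simp add: divide_nonneg_nonpos)
    moreover have "A / (\<eta>\<^sup>2 * (1 + r)) \<ge> 0" using A0 r0 by simp
    ultimately have "A / (\<eta>\<^sup>2 * (1 + r)) * ((1 - \<eta>) / P) \<le> 0"
      by (metis mult_nonneg_nonpos)
    then show False using tb tau by linarith
  qed
  have key: "\<eta>\<^sup>2 * P \<le> A / D * (1 - \<eta>)"
  proof -
    have "\<tau> n \<le> (A * (1 - \<eta>)) / (\<eta>\<^sup>2 * (1 + r) * P)" using tb by simp
    then have "\<tau> n * (\<eta>\<^sup>2 * (1 + r) * P) \<le> A * (1 - \<eta>)"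
      using P0 r0 e0 by (simp add: le_divide_eq)
    then show ?thesis using D0 P0 unfolding D_def by (simp add: field_simps)
  qed
  have ge: "dcoef \<tau> \<eta> n (j - 1) - dcoef \<tau> \<eta> n j - S n * \<eta> ^ j \<ge> \<eta> ^ j * K"
  proof (cases "j = 1")
    case True
    have b1n: "b1 \<tau> n \<le> 0" using b1 D0 unfolding D_def by (simp add: divide_nonpos_pos)
    have "\<eta> * P = \<eta>\<^sup>2 * P / \<eta>" using e0 by (simp add: power2_eq_square)
    also have "\<dots> \<le> (A / D) * (1 - \<eta>) / \<eta>" using divide_right_mono[OF key, of \<eta>] e0 by simp
    also have "\<dots> = b0 \<tau> n * (1 - \<eta>) + b1 \<tau> n * (1 - \<eta>) / \<eta>" using B[symmetric] e0
      by (simp add: field_simps)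
    also have "\<dots> \<le> b0 \<tau> n * (1 - \<eta>) - b1 \<tau> n"
    proof -
      have "b1 \<tau> n * (1 - \<eta>) / \<eta> + b1 \<tau> n = b1 \<tau> n / \<eta>" using e0 by (simp add: field_simps)
      moreover have "b1 \<tau> n / \<eta> \<le> 0" using b1n e0 by (simp add: divide_nonpos_pos)
      ultimately show ?thesis by linarith
    qed
    finally show ?thesis using True unfolding P_def by (simp add: dcoef_def algebra_simps)
  next
    case False
    define m where "m = j - 2"
    have m: "j = Suc (Suc m)" using False j1 unfolding m_def by linarith
    have "dcoef \<tau> \<eta> n (j - 1) - dcoef \<tau> \<eta> n j = \<eta> ^ m * (A / D) * (1 - \<eta>)"
    proof -
      have d1: "dcoef \<tau> \<eta> n (j - 1) = \<eta> ^ m * (A / D)" using m unfolding dcoef_def B by simp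
      have d2: "dcoef \<tau> \<eta> n j = \<eta> ^ m * \<eta> * (A / D)" using m unfolding dcoef_def B by (simp add: mult.commute)
      have "\<And>X. \<eta> ^ m * X - \<eta> ^ m * \<eta> * X = \<eta> ^ m * X * (1 - \<eta>)" by (simp add: algebra_simps)
      then show ?thesis unfolding d1 d2 .
    qed
    moreover have "\<eta> ^ m * (\<eta>\<^sup>2 * P) \<le> \<eta> ^ m * (A / D * (1 - \<eta>))"
      using e0 by (intro mult_left_mono[OF key]) simp
    ultimately show ?thesis using m unfolding P_def by (simp add: algebra_simps power2_eq_square)
  qed
  have eq: "Qmat M (L / real M) \<epsilon> \<tau> \<eta> S n j =
     (\<lambda>p q. (dcoef \<tau> \<eta> n (j - 1) - dcoef \<tau> \<eta> n j - S n * \<eta> ^ j) * idm p q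
        + (\<eta> ^ j * \<epsilon>\<^sup>2) * lap M h p q)"
    by (simp add: Qmat_def h_def fun_eq_iff)
  show ?thesis unfolding eq
  proof (rule norm_main)
    show "0 < M" by fact
    show "0 \<le> \<eta> ^ j * \<epsilon>\<^sup>2" using e0 by simp
    show "\<eta> ^ j * \<epsilon>\<^sup>2 * (4 / h\<^sup>2) \<le> dcoef \<tau> \<eta> n (j - 1) - dcoef \<tau> \<eta> n j - S n * \<eta> ^ j"
      using ge unfolding K_def by (simp add: algebra_simps)
  qed
qed

end
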